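(* Let $1\le k\le n-1$, $d=n-1$, $h=1$, $\alpha=M/k$, and $\beta=\alpha'=\frac{M}{k(d-k+2)}$ (assumed a positive integer). Then, for a sufficiently large finite field $\mathrm{GF}(q)$, there exist linear codes for the system $\mathrm{DSS}(n,k,d,1,\alpha,\alpha',\beta,M)$ (linear storage codes on the complete nodes and on the repairing node, and linear repair combinations) such that, when a complete node fails and each of the $d$ surviving complete nodes and the repairing node transmits $\beta$ packets to the new node, the reconstruction property is preserved: any $k$ complete nodes of the resulting system can recover the file.
   Context: $\mathrm{DSS}(n,k,d,h,\alpha,\alpha',\beta,M)$: a file of $M$ packets over $\mathrm{GF}(q)$ is stored on $n$ complete storage nodes of capacity $\alpha$ each (each node stores $\alpha$ linear combinations of the file packets) so that any $k$ of them reconstruct the file (reconstruction property); in addition there are $h$ repairing storage nodes of capacity $\alpha'<\alpha$, which are never contacted by data collectors. When a complete node fails, a new node is created from $\beta$ packets (linear combinations of stored data) received from each of $d$ surviving complete nodes and from each of the $h$ repairing nodes; repair is functional (the new node need not equal the failed one). *)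

theory Defs
  imports "HOL-Algebra.Ring"
begin

text \<open>A packet / stored symbol is represented by its coefficient vector
  with respect to the M file packets: a function nat => 'a, only indices below M matter.\<close>

type_synonym 'a cvec = "nat \<Rightarrow> 'a"

definition in_span :: "('a, 'b) ring_scheme \<Rightarrow> nat \<Rightarrow> 'a cvec set \<Rightarrow> 'a cvec \<Rightarrow> bool" where
  "in_span R M A u \<longleftrightarrow>
     (\<exists>ws c. set ws \<subseteq> A \<and> (\<forall>t<length ws. c t \<in> carrier R) \<and>
        (\<forall>j<M. u j = finsum R (\<lambda>t. c t \<otimes>\<^bsub>R\<^esub> (ws ! t) j) {..<length ws}))"

definition is_vec :: "('a, 'b) ring_scheme \<Rightarrow> nat \<Rightarrow> 'a cvec \<Rightarrow> bool" where
  "is_vec R M v \<longleftrightarrow> (\<forall>j<M. v j \<in> carrier R)"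

definition reconstructs :: "('a, 'b) ring_scheme \<Rightarrow> nat \<Rightarrow> nat \<Rightarrow> nat \<Rightarrow> (nat \<Rightarrow> 'a cvec list) \<Rightarrow> bool" where
  "reconstructs R M n k nodes \<longleftrightarrow>
     (\<forall>S. S \<subseteq> {..<n} \<longrightarrow> card S = k \<longrightarrow>
        (\<forall>v. is_vec R M v \<longrightarrow> in_span R M (\<Union>i\<in>S. set (nodes i)) v))"

definition storage_ok :: "('a, 'b) ring_scheme \<Rightarrow> nat \<Rightarrow> nat \<Rightarrow> nat \<Rightarrow> (nat \<Rightarrow> 'a cvec list) \<Rightarrow> bool" where
  "storage_ok R M n alpha nodes \<longleftrightarrow>
     (\<forall>i<n. length (nodes i) = alpha \<and> (\<forall>v\<in>set (nodes i). is_vec R M v))"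

definition repair_step ::
  "('a, 'b) ring_scheme \<Rightarrow> nat \<Rightarrow> nat \<Rightarrow> nat \<Rightarrow> nat \<Rightarrow> 'a cvec list \<Rightarrow>
   (nat \<Rightarrow> 'a cvec list) \<Rightarrow> nat \<Rightarrow> (nat \<Rightarrow> 'a cvec list) \<Rightarrow> bool" where
  "repair_step R M n alpha beta rep nodes f nodes' \<longleftrightarrow>
     f < n \<and> (\<forall>i. i \<noteq> f \<longrightarrow> nodes' i = nodes i) \<and>
     (\<exists>msg :: nat \<Rightarrow> 'a cvec list. \<exists>rmsg :: 'a cvec list.
        (\<forall>i<n. i \<noteq> f \<longrightarrow> length (msg i) = beta \<and>
            (\<forall>u\<in>set (msg i). in_span R M (set (nodes i)) u)) \<and>
        length rmsg = beta \<and> (\<forall>u\<in>set rmsg. in_span R M (set rep) u) \<and>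
        length (nodes' f) = alpha \<and>
        (\<forall>u\<in>set (nodes' f).
           in_span R M ((\<Union>i\<in>{..<n} - {f}. set (msg i)) \<union> set rmsg) u))"

fun run :: "((nat \<Rightarrow> 'a cvec list) \<Rightarrow> nat \<Rightarrow> (nat \<Rightarrow> 'a cvec list)) \<Rightarrow>
            (nat \<Rightarrow> 'a cvec list) \<Rightarrow> nat list \<Rightarrow> (nat \<Rightarrow> 'a cvec list)" where
  "run strat s [] = s"
| "run strat s (f # fs) = run strat (strat s f) fs"

end

theory Submission imports Defs "Jordan_Normal_Form.Missing_VectorSpace" begin

context vectorspace begin

lemma steinitz:
  assumes "finite G" "finite Y" "Y \<subseteq> carrier V" "lin_indpt G" "G \<subseteq> span Y"
  shows "card G \<le> card Y"
proof -
  have "\<exists>C. finite C \<and> C\<subseteq>carrier V \<and> C\<subseteq>span Y \<and> C\<inter>G={} \<and> int (card C) \<le> (int (card Y)) - (int (card G)) \<and> (span (G \<union> C) = span Y)"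
    by (rule replacement[OF assms(1,2,3,4,5)])
  then show ?thesis by (elim exE conjE) linarith
qed

lemma indep_insert:
  assumes "Y \<subseteq> carrier V" "lin_indpt Y" "v \<in> carrier V" "v \<notin> span Y"
  shows "lin_indpt (insert v Y)" "v \<notin> Y"
proof -
  show nY: "v \<notin> Y" using assms in_own_span by blast
  have "\<not> lin_dep (Y \<union> {v})" using lin_dep_iff_in_span[OF assms(1,2,3) nY] assms(4) by simp
  then show "lin_indpt (insert v Y)" by simp
qed

lemma sub_neg:
  assumes "submodule K Z V" "v \<in> Z"
  shows "\<ominus>\<^bsub>V\<^esub> v \<in> Z"
proof -
  have vc: "v \<in> carrier V" using assms unfolding submodule_def by blast
  have "\<ominus>\<^bsub>K\<^esub> \<one>\<^bsub>K\<^esub> \<odot>\<^bsub>V\<^esub> v \<in> Z" using assms unfolding submodule_def by auto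
  then show ?thesis using smult_minus_1[OF vc] by simp
qed

lemma sub_add:
  assumes "submodule K Z V" "v \<in> Z" "w \<in> Z"
  shows "v \<oplus>\<^bsub>V\<^esub> w \<in> Z"
  using assms unfolding submodule_def by blast

lemma sub_smult:
  assumes "submodule K Z V" "v \<in> Z" "c \<in> carrier K"
  shows "c \<odot>\<^bsub>V\<^esub> v \<in> Z"
  using assms unfolding submodule_def by blast

lemma sub_carrier:
  assumes "submodule K Z V" "v \<in> Z"
  shows "v \<in> carrier V"
  using assms unfolding submodule_def by blast

lemma y_in:
  assumes Z: "submodule K Z V" and x: "x \<in> Z" and y: "y \<in> carrier V" and c: "c \<in> carrier K"
    and g: "y \<oplus>\<^bsub>V\<^esub> c \<odot>\<^bsub>V\<^esub> x \<in> Z"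
  shows "y \<in> Z"
proof -
  have xc: "x \<in> carrier V" using sub_carrier[OF Z x] .
  have cx: "c \<odot>\<^bsub>V\<^esub> x \<in> Z" using sub_smult[OF Z x c] .
  have cxc: "c \<odot>\<^bsub>V\<^esub> x \<in> carrier V" using c xc by simp
  have "(y \<oplus>\<^bsub>V\<^esub> c \<odot>\<^bsub>V\<^esub> x) \<oplus>\<^bsub>V\<^esub> \<ominus>\<^bsub>V\<^esub> (c \<odot>\<^bsub>V\<^esub> x) \<in> Z"
    using sub_add[OF Z g sub_neg[OF Z cx]] .
  also have "(y \<oplus>\<^bsub>V\<^esub> c \<odot>\<^bsub>V\<^esub> x) \<oplus>\<^bsub>V\<^esub> \<ominus>\<^bsub>V\<^esub> (c \<odot>\<^bsub>V\<^esub> x) = y"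
    using y cxc by (simp add: M.a_assoc M.r_neg)
  finally show ?thesis .
qed

lemma two_pts:
  assumes Z: "submodule K Z V" and x: "x \<in> carrier V" and y: "y \<in> carrier V"
    and c1: "c1 \<in> carrier K" and c2: "c2 \<in> carrier K" and ne: "c1 \<noteq> c2"
    and g1: "y \<oplus>\<^bsub>V\<^esub> c1 \<odot>\<^bsub>V\<^esub> x \<in> Z" and g2: "y \<oplus>\<^bsub>V\<^esub> c2 \<odot>\<^bsub>V\<^esub> x \<in> Z"
  shows "x \<in> Z"
proof -
  have c1x: "c1 \<odot>\<^bsub>V\<^esub> x \<in> carrier V" and c2x: "c2 \<odot>\<^bsub>V\<^esub> x \<in> carrier V" using c1 c2 x by auto
  have "(y \<oplus>\<^bsub>V\<^esub> c1 \<odot>\<^bsub>V\<^esub> x) \<oplus>\<^bsub>V\<^esub> \<ominus>\<^bsub>V\<^esub> (y \<oplus>\<^bsub>V\<^esub> c2 \<odot>\<^bsub>V\<^esub> x) \<in> Z"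
    using sub_add[OF Z g1 sub_neg[OF Z g2]] .
  also have "(y \<oplus>\<^bsub>V\<^esub> c1 \<odot>\<^bsub>V\<^esub> x) \<oplus>\<^bsub>V\<^esub> \<ominus>\<^bsub>V\<^esub> (y \<oplus>\<^bsub>V\<^esub> c2 \<odot>\<^bsub>V\<^esub> x)
      = c1 \<odot>\<^bsub>V\<^esub> x \<oplus>\<^bsub>V\<^esub> \<ominus>\<^bsub>V\<^esub> (c2 \<odot>\<^bsub>V\<^esub> x)"
    using y c1x c2x by (simp only: M.minus_add M.a_assoc M.a_lcomm[of "c1 \<odot>\<^bsub>V\<^esub> x"] M.r_neg2 M.a_inv_closed M.a_closed)
  also have "\<ominus>\<^bsub>V\<^esub> (c2 \<odot>\<^bsub>V\<^esub> x) = (\<ominus>\<^bsub>K\<^esub> c2) \<odot>\<^bsub>V\<^esub> x"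
  proof -
    have "\<ominus>\<^bsub>V\<^esub> (c2 \<odot>\<^bsub>V\<^esub> x) = (\<ominus>\<^bsub>K\<^esub> \<one>\<^bsub>K\<^esub>) \<odot>\<^bsub>V\<^esub> (c2 \<odot>\<^bsub>V\<^esub> x)"
      using smult_minus_1[OF c2x] by simp
    also have "\<dots> = ((\<ominus>\<^bsub>K\<^esub> \<one>\<^bsub>K\<^esub>) \<otimes>\<^bsub>K\<^esub> c2) \<odot>\<^bsub>V\<^esub> x"
      using c2 x by (simp only: smult_assoc1 R.one_closed R.a_inv_closed)
    also have "(\<ominus>\<^bsub>K\<^esub> \<one>\<^bsub>K\<^esub>) \<otimes>\<^bsub>K\<^esub> c2 = \<ominus>\<^bsub>K\<^esub> c2"
      using c2 by (simp add: R.l_minus)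
    finally show ?thesis .
  qed
  also have "c1 \<odot>\<^bsub>V\<^esub> x \<oplus>\<^bsub>V\<^esub> (\<ominus>\<^bsub>K\<^esub> c2) \<odot>\<^bsub>V\<^esub> x = (c1 \<ominus>\<^bsub>K\<^esub> c2) \<odot>\<^bsub>V\<^esub> x"
    using c1 c2 x by (simp add: smult_l_distr R.minus_eq)
  finally have d: "(c1 \<ominus>\<^bsub>K\<^esub> c2) \<odot>\<^bsub>V\<^esub> x \<in> Z" .
  have dc: "c1 \<ominus>\<^bsub>K\<^esub> c2 \<in> carrier K" using c1 c2 by simp
  have dn: "c1 \<ominus>\<^bsub>K\<^esub> c2 \<noteq> \<zero>\<^bsub>K\<^esub>"
  proof
    assume a: "c1 \<ominus>\<^bsub>K\<^esub> c2 = \<zero>\<^bsub>K\<^esub>"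
    have "c1 \<ominus>\<^bsub>K\<^esub> c2 \<oplus>\<^bsub>K\<^esub> c2 = c1" using c1 c2 by (simp add: R.minus_eq R.a_assoc R.l_neg)
    then show False using a c2 ne by simp
  qed
  have "x = inv\<^bsub>K\<^esub> (c1 \<ominus>\<^bsub>K\<^esub> c2) \<odot>\<^bsub>V\<^esub> ((c1 \<ominus>\<^bsub>K\<^esub> c2) \<odot>\<^bsub>V\<^esub> x)"
    using mult_inverse[OF dc x refl dn] .
  also have "\<dots> \<in> Z" using sub_smult[OF Z d] dc dn by simp
  finally show ?thesis .
qed


lemma avoid:
  assumes "finite Zs" "card Zs < card (carrier K)"
    and "\<forall>Z\<in>Zs. submodule K Z V" and D: "submodule K D V"
    and "\<forall>Z\<in>Zs. \<exists>y\<in>D. y \<notin> Z"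
  shows "\<exists>x\<in>D. \<forall>Z\<in>Zs. x \<notin> Z"
  using assms(1-3,5)
proof (induction Zs rule: finite_induct)
  case empty
  then show ?case using D unfolding submodule_def by blast
next
  case (insert Z F)
  have finK: "finite (carrier K)" using insert.prems(1) card.infinite by fastforce
  have cF: "card F < card (carrier K)" using insert by simp
  have "\<exists>x\<in>D. \<forall>Z'\<in>F. x \<notin> Z'"
    by (rule insert.IH) (use cF insert.prems in auto)
  then obtain x where x: "x \<in> D" "\<forall>Z'\<in>F. x \<notin> Z'" by blast
  show ?case
  proof (cases "x \<in> Z")
    case False then show ?thesis using x by blast
  next
    case True
    obtain y where y: "y \<in> D" "y \<notin> Z" using insert.prems by blast
    have xc: "x \<in> carrier V" using sub_carrier[OF D x(1)] .
    have yc: "y \<in> carrier V" using sub_carrier[OF D y(1)] .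
    have ZZ: "submodule K Z V" using insert.prems by blast
    define g where "g c = y \<oplus>\<^bsub>V\<^esub> c \<odot>\<^bsub>V\<^esub> x" for c
    define bad where "bad = (\<Union>Z'\<in>F. {c \<in> carrier K. g c \<in> Z'})"
    have sub1: "card {c \<in> carrier K. g c \<in> Z'} \<le> 1" if Z': "Z' \<in> F" for Z'
    proof -
      have sm: "submodule K Z' V" using insert.prems Z' by blast
      have "\<forall>c1\<in>{c \<in> carrier K. g c \<in> Z'}. \<forall>c2\<in>{c \<in> carrier K. g c \<in> Z'}. c1 = c2"
      proof (intro ballI)
        fix c1 c2 assume c1: "c1 \<in> {c \<in> carrier K. g c \<in> Z'}" and c2: "c2 \<in> {c \<in> carrier K. g c \<in> Z'}"
        show "c1 = c2"
        proof (rule ccontr)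
          assume ne: "c1 \<noteq> c2"
          have "x \<in> Z'" using two_pts[OF sm xc yc _ _ ne] c1 c2 unfolding g_def by simp
          then show False using x(2) Z' by blast
        qed
      qed
      then show ?thesis using card_le_Suc0_iff_eq[of "{c \<in> carrier K. g c \<in> Z'}"] finK by simp
    qed
    have "card bad \<le> (\<Sum>Z'\<in>F. card {c \<in> carrier K. g c \<in> Z'})"
      unfolding bad_def by (rule card_UN_le[OF insert.hyps(1)])
    also have "\<dots> \<le> (\<Sum>Z'\<in>F. 1)" using sub1 by (intro sum_mono) auto
    also have "\<dots> = card F" by simp
    finally have "card bad < card (carrier K)" using cF by linarith
    moreover have bK: "bad \<subseteq> carrier K" unfolding bad_def by auto
    ultimately have "\<not> carrier K \<subseteq> bad" using card_mono[OF finite_subset[OF bK finK]] by fastforce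
    then obtain c where c: "c \<in> carrier K" "c \<notin> bad" by blast
    have gD: "g c \<in> D" unfolding g_def using sub_add[OF D y(1) sub_smult[OF D x(1) c(1)]] .
    have gZ: "g c \<notin> Z" using y_in[OF ZZ True yc c(1)] y(2) unfolding g_def by blast
    have gF: "\<forall>Z'\<in>F. g c \<notin> Z'" using c unfolding bad_def by blast
    show ?thesis using gD gZ gF by blast
  qed
qed

lemma span_carrier: "S \<subseteq> carrier V \<Longrightarrow> span S \<subseteq> carrier V"
  by (rule span_is_subset2)

lemma greedy:
  fixes ls :: "'l list" and Cs :: "'i set" and P :: "'l \<Rightarrow> 'c set"
    and B :: "'i \<Rightarrow> 'c set" and rel :: "'i \<Rightarrow> 'l \<Rightarrow> bool"
  assumes "distinct ls" "finite Cs" "card Cs < card (carrier K)"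
    and "\<forall>l\<in>set ls. P l \<subseteq> carrier V"
    and Bc: "\<forall>c\<in>Cs. B c \<subseteq> carrier V \<and> finite (B c) \<and> lin_indpt (B c)"
    and "\<forall>c\<in>Cs. \<forall>l\<in>set ls. rel c l \<longrightarrow> (\<exists>G. finite G \<and> G \<subseteq> span (P l \<union> B c) \<and> lin_indpt G
            \<and> card (B c) + card {l'\<in>set ls. rel c l'} \<le> card G)"
  shows "\<exists>ch. (\<forall>l\<in>set ls. ch l \<in> span (P l)) \<and>
    (\<forall>c\<in>Cs. lin_indpt (B c \<union> ch ` {l\<in>set ls. rel c l}) \<and>
       card (B c \<union> ch ` {l\<in>set ls. rel c l}) = card (B c) + card {l\<in>set ls. rel c l})"
  using assms(1,4,6)
proof (induction ls rule: rev_induct)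
  case Nil
  then show ?case using Bc by auto
next
  case (snoc l ls)
  have IHp: "\<forall>c\<in>Cs. \<forall>l0\<in>set ls. rel c l0 \<longrightarrow> (\<exists>G. finite G \<and> G \<subseteq> span (P l0 \<union> B c) \<and> lin_indpt G
            \<and> card (B c) + card {l'\<in>set ls. rel c l'} \<le> card G)"
  proof (intro ballI impI)
    fix c l0 assume "c \<in> Cs" "l0 \<in> set ls" "rel c l0"
    then obtain G where G: "finite G" "G \<subseteq> span (P l0 \<union> B c)" "lin_indpt G"
       "card (B c) + card {l'\<in>set (ls @ [l]). rel c l'} \<le> card G" using snoc.prems(3) by fastforce
    have "card {l'\<in>set ls. rel c l'} \<le> card {l'\<in>set (ls @ [l]). rel c l'}"
      by (rule card_mono) auto
    then show "\<exists>G. finite G \<and> G \<subseteq> span (P l0 \<union> B c) \<and> lin_indpt G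
            \<and> card (B c) + card {l'\<in>set ls. rel c l'} \<le> card G" using G by (intro exI[of _ G]) auto
  qed
  obtain ch where ch: "\<forall>l\<in>set ls. ch l \<in> span (P l)"
    "\<forall>c\<in>Cs. lin_indpt (B c \<union> ch ` {l\<in>set ls. rel c l}) \<and>
       card (B c \<union> ch ` {l\<in>set ls. rel c l}) = card (B c) + card {l\<in>set ls. rel c l}"
    using snoc.IH snoc.prems IHp by auto
  have lnot: "l \<notin> set ls" using snoc.prems(1) by simp
  define Y where "Y c = B c \<union> ch ` {l\<in>set ls. rel c l}" for c
  have Pl: "P l \<subseteq> carrier V" using snoc.prems(2) by simp
  have chc: "\<forall>l\<in>set ls. ch l \<in> carrier V" using ch(1) snoc.prems(2) span_carrier by auto
  have Yc: "Y c \<subseteq> carrier V" "finite (Y c)" if "c \<in> Cs" for c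
    using Bc that chc unfolding Y_def by auto
  define Zs where "Zs = (\<lambda>c. span (Y c)) ` {c\<in>Cs. rel c l}"
  have finZ: "finite Zs" unfolding Zs_def using assms(2) by simp
  have cardZ: "card Zs < card (carrier K)"
  proof -
    have "card Zs \<le> card {c\<in>Cs. rel c l}" unfolding Zs_def by (rule card_image_le) (use assms(2) in simp)
    also have "\<dots> \<le> card Cs" using assms(2) by (intro card_mono) auto
    finally show ?thesis using assms(3) by linarith
  qed
  have subZ: "\<forall>Z\<in>Zs. submodule K Z V" unfolding Zs_def using Yc span_is_submodule by auto
  have D: "submodule K (span (P l)) V" using span_is_submodule[OF Pl] .
  have outZ: "\<forall>Z\<in>Zs. \<exists>y\<in>span (P l). y \<notin> Z"
  proof
    fix Z assume "Z \<in> Zs"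
    then obtain c where c: "c \<in> Cs" "rel c l" "Z = span (Y c)" unfolding Zs_def by blast
    obtain G where G: "finite G" "G \<subseteq> span (P l \<union> B c)" "lin_indpt G"
       "card (B c) + card {l'\<in>set (ls @ [l]). rel c l'} \<le> card G" using snoc.prems(3) c by fastforce
    have cnt: "card {l'\<in>set (ls @ [l]). rel c l'} = Suc (card {l'\<in>set ls. rel c l'})"
    proof -
      have "{l'\<in>set (ls @ [l]). rel c l'} = insert l {l'\<in>set ls. rel c l'}" using c by auto
      then show ?thesis using lnot by simp
    qed
    show "\<exists>y\<in>span (P l). y \<notin> Z"
    proof (rule ccontr)
      assume "\<not> (\<exists>y\<in>span (P l). y \<notin> Z)"
      then have "span (P l) \<subseteq> span (Y c)" using c by blast
      moreover have "P l \<subseteq> span (P l)" using in_own_span[OF Pl] .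
      moreover have "B c \<subseteq> span (Y c)" using in_own_span[OF Yc(1)[OF c(1)]] unfolding Y_def by blast
      ultimately have "P l \<union> B c \<subseteq> span (Y c)" by blast
      then have "span (P l \<union> B c) \<subseteq> span (Y c)"
        using span_is_subset span_is_submodule[OF Yc(1)[OF c(1)]] by blast
      then have "card G \<le> card (Y c)" using steinitz[OF G(1) Yc(2)[OF c(1)] Yc(1)[OF c(1)] G(3)] G(2) by blast
      then show False using ch(2) c(1) G(4) cnt unfolding Y_def by auto
    qed
  qed
  obtain v where v: "v \<in> span (P l)" "\<forall>Z\<in>Zs. v \<notin> Z" using avoid[OF finZ cardZ subZ D outZ] by blast
  have vc: "v \<in> carrier V" using v(1) span_carrier[OF Pl] by blast
  define ch' where "ch' = ch(l := v)"
  have img: "ch' ` {l'\<in>set ls. rel c l'} = ch ` {l'\<in>set ls. rel c l'}" for c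
    unfolding ch'_def using lnot by (intro image_cong) auto
  show ?case
  proof (rule exI[of _ ch'], rule conjI; intro ballI)
    fix l0 assume "l0 \<in> set (ls @ [l])"
    then show "ch' l0 \<in> span (P l0)" using ch(1) v(1) lnot unfolding ch'_def by auto
  next
    fix c assume c: "c \<in> Cs"
    show "lin_indpt (B c \<union> ch' ` {l'\<in>set (ls @ [l]). rel c l'}) \<and>
       card (B c \<union> ch' ` {l'\<in>set (ls @ [l]). rel c l'}) = card (B c) + card {l'\<in>set (ls @ [l]). rel c l'}"
    proof (cases "rel c l")
      case True
      have e1: "{l'\<in>set (ls @ [l]). rel c l'} = insert l {l'\<in>set ls. rel c l'}" using True by auto
      have e2: "B c \<union> ch' ` {l'\<in>set (ls @ [l]). rel c l'} = insert v (Y c)"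
      proof -
        have "ch' l = v" by (simp add: ch'_def)
        have "B c \<union> ch' ` {l'\<in>set (ls @ [l]). rel c l'} = B c \<union> insert (ch' l) (ch' ` {l'\<in>set ls. rel c l'})"
          using e1 by simp
        also have "\<dots> = insert v (Y c)" using img[of c] \<open>ch' l = v\<close> unfolding Y_def by blast
        finally show ?thesis .
      qed
      have vY: "v \<notin> span (Y c)" using v(2) c True unfolding Zs_def by blast
      have li: "lin_indpt (insert v (Y c))" and vn: "v \<notin> Y c"
        using indep_insert[OF Yc(1)[OF c] _ vc vY] ch(2) c unfolding Y_def by auto
      have "card (insert v (Y c)) = Suc (card (Y c))" using vn Yc(2)[OF c] by simp
      then show ?thesis unfolding e2 using li ch(2) c lnot e1 unfolding Y_def by simp
    next
      case False
      have e1: "{l'\<in>set (ls @ [l]). rel c l'} = {l'\<in>set ls. rel c l'}" using False by auto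
      show ?thesis unfolding e1 img using ch(2) c by simp
    qed
  qed
qed

end

locale fsp = vectorspace R V for R :: "'a ring" and V :: "('a, nat \<Rightarrow> 'a) module" +
  fixes M :: nat
  assumes V_def: "V = ring.func_space R {..<M}"
begin

lemma carrierV: "carrier V = {..<M} \<rightarrow>\<^sub>E carrier R"
  by (simp add: V_def func_space_def)
lemma addV: "x \<oplus>\<^bsub>V\<^esub> y = (\<lambda>v\<in>{..<M}. x v \<oplus>\<^bsub>R\<^esub> y v)"
  by (simp add: V_def func_space_def)
lemma smultV: "c \<odot>\<^bsub>V\<^esub> y = (\<lambda>v\<in>{..<M}. c \<otimes>\<^bsub>R\<^esub> y v)"
  by (simp add: V_def func_space_def)
lemma zeroV: "\<zero>\<^bsub>V\<^esub> = (\<lambda>v\<in>{..<M}. \<zero>\<^bsub>R\<^esub>)"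
  by (simp add: V_def func_space_def)

lemma cV_eval: "v \<in> carrier V \<Longrightarrow> j < M \<Longrightarrow> v j \<in> carrier R"
  unfolding carrierV by auto

lemma finsum_eval:
  assumes "finite S" "g \<in> S \<rightarrow> carrier V" "j < M"
  shows "finsum V g S j = (\<Oplus>\<^bsub>R\<^esub>s\<in>S. g s j)"
  using assms
proof (induction S rule: finite_induct)
  case empty
  then show ?case by (simp add: zeroV)
next
  case (insert a F)
  have ga: "g a \<in> carrier V" and gF: "g \<in> F \<rightarrow> carrier V" using insert.prems by auto
  have "finsum V g (insert a F) = g a \<oplus>\<^bsub>V\<^esub> finsum V g F"
    using M.finsum_insert[OF insert.hyps gF ga] .
  then have "finsum V g (insert a F) j = g a j \<oplus>\<^bsub>R\<^esub> finsum V g F j"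
    using insert.prems(2) by (simp add: addV)
  also have "\<dots> = g a j \<oplus>\<^bsub>R\<^esub> (\<Oplus>\<^bsub>R\<^esub>s\<in>F. g s j)" using insert.IH gF insert.prems(2) by simp
  also have "\<dots> = (\<Oplus>\<^bsub>R\<^esub>s\<in>insert a F. g s j)"
  proof -
    have p1: "(\<lambda>s. g s j) \<in> F \<rightarrow> carrier R" using gF cV_eval insert.prems(2) by auto
    have p2: "g a j \<in> carrier R" using ga cV_eval insert.prems(2) by auto
    show ?thesis using R.finsum_insert[OF insert.hyps p1 p2] by simp
  qed
  finally show ?case .
qed

lemma lincomb_eval:
  assumes "finite S" "S \<subseteq> carrier V" "a \<in> S \<rightarrow> carrier R" "j < M"
  shows "lincomb a S j = (\<Oplus>\<^bsub>R\<^esub>v\<in>S. a v \<otimes>\<^bsub>R\<^esub> v j)"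
proof -
  have g: "(\<lambda>v. a v \<odot>\<^bsub>V\<^esub> v) \<in> S \<rightarrow> carrier V" using assms by auto
  show ?thesis unfolding lincomb_def using finsum_eval[OF assms(1) g assms(4)] assms(4)
    by (simp add: smultV)
qed

lemma in_span_cong:
  assumes "in_span R M A u" "\<forall>j<M. u j = u' j"
  shows "in_span R M A u'"
  using assms unfolding in_span_def by metis

lemma nth_image: "(!) ws ` {..<length ws} = set ws"
  by (auto simp: in_set_conv_nth)

lemma span_in_span:
  assumes A: "A \<subseteq> carrier V" and u: "u \<in> span A"
  shows "in_span R M A u"
proof -
  obtain a S where aS: "u = lincomb a S" "finite S" "S \<subseteq> A" "a \<in> S \<rightarrow> carrier R"
    using u unfolding span_def by blast
  obtain ws where ws: "set ws = S" "distinct ws" using finite_distinct_list[OF aS(2)] by blast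
  have SC: "S \<subseteq> carrier V" using aS(3) A by blast
  show ?thesis unfolding in_span_def
  proof (intro exI[of _ ws] exI[of _ "\<lambda>t. a (ws ! t)"] conjI allI impI)
    show "set ws \<subseteq> A" using ws aS by simp
  next
    fix t assume "t < length ws" then show "a (ws ! t) \<in> carrier R" using aS(4) ws by auto
  next
    fix j assume j: "j < M"
    have "u j = (\<Oplus>\<^bsub>R\<^esub>v\<in>S. a v \<otimes>\<^bsub>R\<^esub> v j)" using lincomb_eval[OF aS(2) SC aS(4) j] aS(1) by simp
    also have "\<dots> = (\<Oplus>\<^bsub>R\<^esub>v\<in>(!) ws ` {..<length ws}. a v \<otimes>\<^bsub>R\<^esub> v j)" using nth_image[of ws] ws(1) by simp
    also have "\<dots> = (\<Oplus>\<^bsub>R\<^esub>t\<in>{..<length ws}. a (ws ! t) \<otimes>\<^bsub>R\<^esub> (ws ! t) j)"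
    proof (rule R.finsum_reindex)
      show "(\<lambda>v. a v \<otimes>\<^bsub>R\<^esub> v j) \<in> (!) ws ` {..<length ws} \<rightarrow> carrier R"
        unfolding nth_image using ws aS(4) SC cV_eval[OF _ j] by auto
      show "inj_on ((!) ws) {..<length ws}" using ws(2) by (simp add: inj_on_nth)
    qed
    finally show "u j = (\<Oplus>\<^bsub>R\<^esub>t\<in>{..<length ws}. a (ws ! t) \<otimes>\<^bsub>R\<^esub> (ws ! t) j)" .
  qed
qed

definition e :: "nat \<Rightarrow> nat \<Rightarrow> 'a" where
  "e j = (\<lambda>i\<in>{..<M}. if i = j then \<one>\<^bsub>R\<^esub> else \<zero>\<^bsub>R\<^esub>)"

definition E where "E = e ` {..<M}"

lemma e_carrier: "e j \<in> carrier V"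
  unfolding carrierV e_def by auto

lemma E_carrier: "E \<subseteq> carrier V" unfolding E_def using e_carrier by auto

lemma e_inj: "inj_on e {..<M}"
proof
  fix i j assume ij: "i \<in> {..<M}" "j \<in> {..<M}" "e i = e j"
  then have eq: "e i i = e j i" by simp
  show "i = j"
  proof (rule ccontr)
    assume ne: "i \<noteq> j"
    have "e j i = \<zero>\<^bsub>R\<^esub>" using ij(1,2) ne unfolding e_def by simp
    moreover have "e i i = \<one>\<^bsub>R\<^esub>" using ij(1,2) unfolding e_def by simp
    ultimately show False using eq one_not_zero by simp
  qed
qed

lemma card_E: "card E = M" unfolding E_def using e_inj by (simp add: card_image)

lemma finite_E: "finite E" unfolding E_def by simp

lemma sum_e:
  assumes "c \<in> {..<M} \<rightarrow> carrier R" "i < M"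
  shows "(\<Oplus>\<^bsub>R\<^esub>j\<in>{..<M}. c j \<otimes>\<^bsub>R\<^esub> e j i) = c i"
proof -
  have "(\<Oplus>\<^bsub>R\<^esub>j\<in>{..<M}. c j \<otimes>\<^bsub>R\<^esub> e j i) = (\<Oplus>\<^bsub>R\<^esub>j\<in>{..<M}. if i = j then c j else \<zero>\<^bsub>R\<^esub>)"
    using assms by (intro R.finsum_cong) (auto simp: e_def Pi_iff simp_implies_def)
  also have "\<dots> = c i" using R.finsum_singleton[of i "{..<M}" c] assms by auto
  finally show ?thesis .
qed

lemma lincomb_E_eval:
  assumes "a \<in> E \<rightarrow> carrier R" "i < M"
  shows "lincomb a E i = a (e i)"
proof -
  have "lincomb a E i = (\<Oplus>\<^bsub>R\<^esub>v\<in>E. a v \<otimes>\<^bsub>R\<^esub> v i)"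
    using lincomb_eval[OF finite_E E_carrier assms] .
  also have "\<dots> = (\<Oplus>\<^bsub>R\<^esub>j\<in>{..<M}. a (e j) \<otimes>\<^bsub>R\<^esub> e j i)"
    unfolding E_def
  proof (rule R.finsum_reindex)
    show "(\<lambda>v. a v \<otimes>\<^bsub>R\<^esub> v i) \<in> e ` {..<M} \<rightarrow> carrier R"
    proof
      fix v assume "v \<in> e ` {..<M}"
      then have "a v \<in> carrier R" "v i \<in> carrier R" using assms e_carrier cV_eval unfolding E_def by auto
      then show "a v \<otimes>\<^bsub>R\<^esub> v i \<in> carrier R" by simp
    qed
  qed (rule e_inj)
  also have "\<dots> = a (e i)" using sum_e[of "\<lambda>j. a (e j)" i] assms unfolding E_def by auto
  finally show ?thesis .
qed

lemma E_indep: "lin_indpt E"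
proof (rule finite_lin_indpt2[OF finite_E E_carrier])
  fix a assume a: "a \<in> E \<rightarrow> carrier R" "lincomb a E = \<zero>\<^bsub>V\<^esub>"
  show "\<forall>v\<in>E. a v = \<zero>\<^bsub>R\<^esub>"
  proof
    fix v assume "v \<in> E"
    then obtain i where i: "i < M" "v = e i" unfolding E_def by auto
    have "a (e i) = lincomb a E i" using lincomb_E_eval[OF a(1) i(1)] by simp
    also have "\<dots> = \<zero>\<^bsub>R\<^esub>" using a(2) i(1) by (simp add: zeroV)
    finally show "a v = \<zero>\<^bsub>R\<^esub>" using i by simp
  qed
qed

lemma E_gen: "span E = carrier V"
proof
  show "span E \<subseteq> carrier V" using span_is_subset2[OF E_carrier] .
next
  show "carrier V \<subseteq> span E"
  proof
    fix v assume v: "v \<in> carrier V"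
    define a where "a w = v (inv_into {..<M} e w)" for w
    have a: "a \<in> E \<rightarrow> carrier R"
      using v e_inj cV_eval unfolding a_def E_def by auto
    have lc: "lincomb a E \<in> carrier V" using lincomb_closed[OF E_carrier a] .
    have "lincomb a E = v"
    proof (rule PiE_ext[of _ "{..<M}" "\<lambda>_. carrier R"])
      show "lincomb a E \<in> {..<M} \<rightarrow>\<^sub>E carrier R" using lc carrierV by simp
      show "v \<in> {..<M} \<rightarrow>\<^sub>E carrier R" using v carrierV by simp
      fix i assume i: "i \<in> {..<M}"
      then show "lincomb a E i = v i" using lincomb_E_eval[OF a] e_inj unfolding a_def by simp
    qed
    then show "v \<in> span E" unfolding span_def using a finite_E by blast
  qed
qed

lemma spans:
  assumes Y: "Y \<subseteq> carrier V" "finite Y" "lin_indpt Y" "M \<le> card Y"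
  shows "span Y = carrier V"
proof (rule ccontr)
  assume ne: "span Y \<noteq> carrier V"
  have "\<not> E \<subseteq> span Y"
  proof
    assume "E \<subseteq> span Y"
    then have "span E \<subseteq> span Y" using span_is_subset span_is_submodule[OF Y(1)] by blast
    then show False using ne E_gen span_is_subset2[OF Y(1)] by blast
  qed
  then obtain w where w: "w \<in> E" "w \<notin> span Y" by blast
  have wc: "w \<in> carrier V" using w E_carrier by blast
  have li: "lin_indpt (insert w Y)" and wn: "w \<notin> Y" using indep_insert[OF Y(1) Y(3) wc w(2)] by auto
  have "card (insert w Y) \<le> card E"
    using steinitz[OF _ finite_E E_carrier li] Y(2) E_gen Y(1) wc by auto
  then show False using card_E wn Y(2) Y(4) by simp
qed

lemma is_vec_carrier: "v \<in> carrier V \<Longrightarrow> is_vec R M v"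
  unfolding is_vec_def using cV_eval by blast

lemma recon:
  assumes "span Y = carrier V" "Y \<subseteq> carrier V" "is_vec R M v"
  shows "in_span R M Y v"
proof -
  have "restrict v {..<M} \<in> carrier V" using assms(3) unfolding carrierV is_vec_def by auto
  then have "in_span R M Y (restrict v {..<M})" using span_in_span[OF assms(2)] assms(1) by simp
  then show ?thesis by (rule in_span_cong) simp
qed

end


locale dss = fsp +
  fixes n k al be :: nat
  assumes k1: "1 \<le> k" and kn: "k + 1 \<le> n" and al_def: "al = (n - k + 1) * be"
    and M_def: "M = k * al" and bpos: "0 < be" and big: "2 * 2 ^ n < card (carrier R)"
begin

definition rep where "rep = map e [0..<be]"
definition Rp where "Rp = set rep"
definition VX :: "(nat \<Rightarrow> (nat \<Rightarrow> 'a) list) \<Rightarrow> nat set \<Rightarrow> (nat \<Rightarrow> 'a) set" where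
  "VX s X = (\<Union>i\<in>X. set (s i))"

definition Inv where "Inv s \<longleftrightarrow> (\<forall>i<n. length (s i) = al \<and> set (s i) \<subseteq> carrier V) \<and>
   (\<forall>X. X \<subseteq> {..<n} \<longrightarrow> card X = k \<longrightarrow> lin_indpt (VX s X) \<and> card (VX s X) = k * al) \<and>
   (\<forall>X. X \<subseteq> {..<n} \<longrightarrow> card X + 1 = k \<longrightarrow> lin_indpt (Rp \<union> VX s X) \<and> card (Rp \<union> VX s X) = be + card X * al)"

lemma be_le_al: "be \<le> al" using al_def by simp
lemma al_le_M: "al \<le> M" using M_def k1 by simp

lemma Rp_eq: "Rp = e ` {..<be}" by (simp add: Rp_def rep_def atLeast0LessThan)
lemma Rp_sub_E: "Rp \<subseteq> E" unfolding Rp_eq E_def using be_le_al al_le_M by auto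
lemma Rp_carrier: "Rp \<subseteq> carrier V" using Rp_sub_E E_carrier by blast
lemma Rp_finite: "finite Rp" unfolding Rp_eq by simp
lemma Rp_indep: "lin_indpt Rp" using subset_li_is_li[OF E_indep Rp_sub_E] .
lemma Rp_card: "card Rp = be"
proof -
  have "inj_on e {..<be}" using inj_on_subset[OF e_inj] be_le_al al_le_M by auto
  then show ?thesis unfolding Rp_eq by (simp add: card_image)
qed
lemma length_rep: "length rep = be" by (simp add: rep_def)

lemma VX_carrier: "\<forall>i\<in>X. set (s i) \<subseteq> carrier V \<Longrightarrow> VX s X \<subseteq> carrier V"
  unfolding VX_def by blast
lemma VX_finite: "finite X \<Longrightarrow> finite (VX s X)"
  unfolding VX_def by simp
lemma VX_card_le:
  assumes "finite X" "\<forall>i\<in>X. length (s i) = al"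
  shows "card (VX s X) \<le> card X * al"
proof -
  have "card (VX s X) \<le> (\<Sum>i\<in>X. card (set (s i)))" unfolding VX_def by (rule card_UN_le[OF assms(1)])
  also have "\<dots> \<le> (\<Sum>i\<in>X. al)"
  proof (intro sum_mono)
    fix i assume "i \<in> X" then show "card (set (s i)) \<le> al" using assms(2) card_length[of "s i"] by simp
  qed
  finally show ?thesis by simp
qed
lemma VX_insert: "VX s (insert j X) = set (s j) \<union> VX s X"
  unfolding VX_def by simp
lemma VX_upd: "f \<notin> X \<Longrightarrow> VX (s(f := x)) X = VX s X"
  unfolding VX_def by (rule SUP_cong) auto

lemma card_Cs:
  assumes "A \<subseteq> {..<n}"
  shows "finite ((Inl::nat set \<Rightarrow> nat set + nat set) ` {X. X \<subseteq> A \<and> P X} \<union> (Inr::nat set \<Rightarrow> nat set + nat set) ` {X. X \<subseteq> A \<and> Q X})"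
    "card ((Inl::nat set \<Rightarrow> nat set + nat set) ` {X. X \<subseteq> A \<and> P X} \<union> (Inr::nat set \<Rightarrow> nat set + nat set) ` {X. X \<subseteq> A \<and> Q X}) < card (carrier R)"
proof -
  have s1: "{X. X \<subseteq> A \<and> P X} \<subseteq> Pow {..<n}" "{X. X \<subseteq> A \<and> Q X} \<subseteq> Pow {..<n}" using assms by auto
  have f1: "finite {X. X \<subseteq> A \<and> P X}" "finite {X. X \<subseteq> A \<and> Q X}"
    using finite_subset[OF s1(1)] finite_subset[OF s1(2)] by auto
  then show "finite ((Inl::nat set \<Rightarrow> nat set + nat set) ` {X. X \<subseteq> A \<and> P X} \<union> (Inr::nat set \<Rightarrow> nat set + nat set) ` {X. X \<subseteq> A \<and> Q X})" by simp
  have "card ((Inl::nat set \<Rightarrow> nat set + nat set) ` {X. X \<subseteq> A \<and> P X} \<union> (Inr::nat set \<Rightarrow> nat set + nat set) ` {X. X \<subseteq> A \<and> Q X})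
      \<le> card ((Inl::nat set \<Rightarrow> nat set + nat set) ` {X. X \<subseteq> A \<and> P X}) + card ((Inr::nat set \<Rightarrow> nat set + nat set) ` {X. X \<subseteq> A \<and> Q X})" by (rule Finite_Set.card_Un_le)
  also have "\<dots> \<le> card {X. X \<subseteq> A \<and> P X} + card {X. X \<subseteq> A \<and> Q X}"
    by (intro add_mono card_image_le f1)
  also have "\<dots> \<le> card (Pow {..<n}) + card (Pow {..<n})"
    by (intro add_mono card_mono s1) auto
  also have "\<dots> = 2 * 2 ^ n" by (simp add: card_Pow)
  finally show "card ((Inl::nat set \<Rightarrow> nat set + nat set) ` {X. X \<subseteq> A \<and> P X} \<union> (Inr::nat set \<Rightarrow> nat set + nat set) ` {X. X \<subseteq> A \<and> Q X}) < card (carrier R)"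
    using big by linarith
qed

lemma empty_indep: "lin_indpt {}" using subset_li_is_li[OF E_indep] by blast

lemma init: "\<exists>s. Inv s"
proof -
  define ls where "ls = List.product [0..<n] [0..<al]"
  have dls: "distinct ls" unfolding ls_def by (simp add: distinct_product)
  have sls: "set ls = {..<n} \<times> {..<al}" unfolding ls_def by (auto simp: atLeast0LessThan)
  define Cs :: "(nat set + nat set) set" where
    "Cs = Inl ` {X. X \<subseteq> {..<n} \<and> card X = k} \<union> Inr ` {X. X \<subseteq> {..<n} \<and> card X + 1 = k}"
  define proj :: "nat set + nat set \<Rightarrow> nat set" where "proj c = (case c of Inl X \<Rightarrow> X | Inr X \<Rightarrow> X)" for c
  define B where "B c = (case c of Inl X \<Rightarrow> {} | Inr X \<Rightarrow> Rp)" for c :: "nat set + nat set"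
  define rel where "rel c l = (fst l \<in> proj c)" for c :: "nat set + nat set" and l :: "nat \<times> nat"
  define P where "P l = E" for l :: "nat \<times> nat"
  have fCs: "finite Cs" and cCs: "card Cs < card (carrier R)" unfolding Cs_def using card_Cs[of "{..<n}"] by auto
  have projC: "proj c \<subseteq> {..<n}" if "c \<in> Cs" for c using that unfolding Cs_def proj_def by auto
  have cnt: "{l\<in>set ls. rel c l} = proj c \<times> {..<al}" if "c \<in> Cs" for c
    using projC[OF that] unfolding sls rel_def by auto
  have ccnt: "card {l\<in>set ls. rel c l} = card (proj c) * al" if "c \<in> Cs" for c
    unfolding cnt[OF that] by (simp add: card_cartesian_product)
  have Bc: "\<forall>c\<in>Cs. B c \<subseteq> carrier V \<and> finite (B c) \<and> lin_indpt (B c)"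
    unfolding Cs_def B_def using Rp_carrier Rp_finite Rp_indep empty_indep by auto
  have hyp: "\<forall>c\<in>Cs. \<forall>l\<in>set ls. rel c l \<longrightarrow> (\<exists>G. finite G \<and> G \<subseteq> span (P l \<union> B c) \<and> lin_indpt G
            \<and> card (B c) + card {l'\<in>set ls. rel c l'} \<le> card G)"
  proof (intro ballI impI)
    fix c l assume c: "c \<in> Cs" and l: "l \<in> set ls" "rel c l"
    have "B c \<subseteq> carrier V" using Bc c by blast
    then have "E \<subseteq> span (P l \<union> B c)" unfolding P_def
      using in_own_span[of E] E_carrier span_is_monotone[of E "E \<union> B c"] by blast
    moreover have "card (B c) + card {l'\<in>set ls. rel c l'} \<le> card E"
    proof (cases c)
      case (Inl X)
      then have "card X = k" using c unfolding Cs_def by auto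
      then show ?thesis using ccnt[OF c] Inl card_E M_def unfolding B_def proj_def by simp
    next
      case (Inr X)
      then have "card X + 1 = k" using c unfolding Cs_def by auto
      then have "be + card X * al \<le> M" using M_def be_le_al
        by (metis add.commute add_le_mono1 mult_Suc plus_1_eq_Suc)
      then show ?thesis using ccnt[OF c] Inr card_E Rp_card unfolding B_def proj_def by simp
    qed
    ultimately show "\<exists>G. finite G \<and> G \<subseteq> span (P l \<union> B c) \<and> lin_indpt G
            \<and> card (B c) + card {l'\<in>set ls. rel c l'} \<le> card G"
      using finite_E E_indep by blast
  qed
  have Pc: "\<forall>l\<in>set ls. P l \<subseteq> carrier V" unfolding P_def using E_carrier by blast
  obtain ch where ch: "\<forall>l\<in>set ls. ch l \<in> span (P l)"
    "\<forall>c\<in>Cs. lin_indpt (B c \<union> ch ` {l\<in>set ls. rel c l}) \<and>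
       card (B c \<union> ch ` {l\<in>set ls. rel c l}) = card (B c) + card {l\<in>set ls. rel c l}"
    using greedy[OF dls fCs cCs Pc Bc hyp] by blast
  define s where "s i = map (\<lambda>t. ch (i, t)) [0..<al]" for i
  have sset: "set (s i) = (\<lambda>t. ch (i, t)) ` {..<al}" for i unfolding s_def by (auto simp: atLeast0LessThan)
  have VXs: "VX s X = ch ` (X \<times> {..<al})" for X unfolding VX_def sset by auto
  have A: "\<forall>i<n. length (s i) = al \<and> set (s i) \<subseteq> carrier V"
    using ch(1) E_gen unfolding sset P_def sls by (auto simp: s_def)
  have B: "\<forall>X. X \<subseteq> {..<n} \<longrightarrow> card X = k \<longrightarrow> lin_indpt (VX s X) \<and> card (VX s X) = k * al"
  proof (intro allI impI)
    fix X assume X: "X \<subseteq> {..<n}" "card X = k"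
    then have c: "Inl X \<in> Cs" unfolding Cs_def by auto
    have "{l\<in>set ls. rel (Inl X) l} = X \<times> {..<al}" using cnt[OF c] by (simp add: proj_def)
    then show "lin_indpt (VX s X) \<and> card (VX s X) = k * al"
      using ch(2) c ccnt[OF c] X unfolding VXs B_def proj_def by auto
  qed
  have C: "\<forall>X. X \<subseteq> {..<n} \<longrightarrow> card X + 1 = k \<longrightarrow> lin_indpt (Rp \<union> VX s X) \<and> card (Rp \<union> VX s X) = be + card X * al"
  proof (intro allI impI)
    fix X assume X: "X \<subseteq> {..<n}" "card X + 1 = k"
    then have c: "Inr X \<in> Cs" unfolding Cs_def by auto
    have "{l\<in>set ls. rel (Inr X) l} = X \<times> {..<al}" using cnt[OF c] by (simp add: proj_def)
    then show "lin_indpt (Rp \<union> VX s X) \<and> card (Rp \<union> VX s X) = be + card X * al"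
      using ch(2) c ccnt[OF c] X Rp_card unfolding VXs B_def proj_def by auto
  qed
  have "Inv s" unfolding Inv_def using A B C by blast
  then show ?thesis by blast
qed


lemma span_sub_carrier: "S \<subseteq> carrier V \<Longrightarrow> x \<in> span S \<Longrightarrow> x \<in> carrier V"
  using span_is_subset2 by blast

lemma step:
  assumes inv: "Inv s" and f: "f < n"
  shows "\<exists>s'. repair_step R M n al be rep s f s' \<and> Inv s'"
proof -
  have inv0: "\<forall>i<n. length (s i) = al \<and> set (s i) \<subseteq> carrier V"
    using inv unfolding Inv_def by (rule conjunct1)
  have inv1: "\<forall>X. X \<subseteq> {..<n} \<longrightarrow> card X = k \<longrightarrow> lin_indpt (VX s X) \<and> card (VX s X) = k * al"
    using inv unfolding Inv_def by (rule conjunct1[OF conjunct2])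
  have inv2: "\<forall>X. X \<subseteq> {..<n} \<longrightarrow> card X + 1 = k \<longrightarrow> lin_indpt (Rp \<union> VX s X) \<and> card (Rp \<union> VX s X) = be + card X * al"
    using inv unfolding Inv_def by (rule conjunct2[OF conjunct2])
  have inv1r: "lin_indpt (VX s X) \<and> card (VX s X) = k * al" if "X \<subseteq> {..<n}" "card X = k" for X
    using inv1 that by blast
  have inv2r: "lin_indpt (Rp \<union> VX s X) \<and> card (Rp \<union> VX s X) = be + card X * al" if "X \<subseteq> {..<n}" "card X + 1 = k" for X
    using inv2 that by blast
  define Oth where "Oth = {..<n} - {f}"
  have fO: "finite Oth" and On: "Oth \<subseteq> {..<n}" and fnO: "f \<notin> Oth" unfolding Oth_def by auto
  have cO: "card Oth = n - 1" unfolding Oth_def using f by simp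
  define m where "m = n - k"
  have nm: "n = m + k" using kn by (simp add: m_def)
  have alm: "al = (m + 1) * be" using al_def m_def by simp
  have sC: "VX s X \<subseteq> carrier V" if "X \<subseteq> {..<n}" for X
    using inv0 that by (intro VX_carrier) auto
  have sL: "card (VX s X) \<le> card X * al" if "X \<subseteq> {..<n}" for X
    using inv0 that finite_subset[OF that] by (intro VX_card_le) auto
  define ls1 where "ls1 = List.product (filter (\<lambda>j. j \<noteq> f) [0..<n]) [0..<be]"
  have d1: "distinct ls1" unfolding ls1_def by (simp add: distinct_product)
  have s1: "set ls1 = Oth \<times> {..<be}" unfolding ls1_def Oth_def by (auto simp: atLeast0LessThan)
  define Cs :: "(nat set + nat set) set" where
    "Cs = Inl ` {T. T \<subseteq> Oth \<and> card T + 1 = k} \<union> Inr ` {U. U \<subseteq> Oth \<and> card U + 2 = k}"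
  have fCs: "finite Cs" and cCs: "card Cs < card (carrier R)" unfolding Cs_def using card_Cs[OF On] by auto
  define proj :: "nat set + nat set \<Rightarrow> nat set" where "proj c = (case c of Inl X \<Rightarrow> X | Inr X \<Rightarrow> X)" for c
  have projO: "proj c \<subseteq> Oth" if "c \<in> Cs" for c using that unfolding Cs_def proj_def by auto
  have projf: "finite (proj c)" if "c \<in> Cs" for c using projO[OF that] fO finite_subset by blast
  have projn: "proj c \<subseteq> {..<n}" if "c \<in> Cs" for c using projO[OF that] On by blast
  have projk: "card (proj c) + 1 \<le> k" if "c \<in> Cs" for c using that unfolding Cs_def proj_def by auto
  have exj: "\<exists>j. j \<in> Oth - proj c" if c: "c \<in> Cs" for c
  proof (rule ccontr)
    assume "\<not> (\<exists>j. j \<in> Oth - proj c)"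
    then have "Oth \<subseteq> proj c" by blast
    then have "card Oth \<le> card (proj c)" using projf[OF c] card_mono by blast
    then show False using projk[OF c] cO kn by linarith
  qed
  define B1 where "B1 c = Rp \<union> VX s (proj c)" for c
  define rel1 where "rel1 c l = (fst l \<notin> proj c)" for c :: "nat set + nat set" and l :: "nat \<times> nat"
  define P1 where "P1 l = set (s (fst l))" for l :: "nat \<times> nat"
  have cnt1: "{l\<in>set ls1. rel1 c l} = (Oth - proj c) \<times> {..<be}" if "c \<in> Cs" for c
    unfolding s1 rel1_def by auto
  have ccnt1: "card {l\<in>set ls1. rel1 c l} = (n - 1 - card (proj c)) * be" if c: "c \<in> Cs" for c
    unfolding cnt1[OF c] card_cartesian_product using card_Diff_subset[OF projf[OF c] projO[OF c]] cO by simp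
  have B1c: "\<forall>c\<in>Cs. B1 c \<subseteq> carrier V \<and> finite (B1 c) \<and> lin_indpt (B1 c)"
  proof
    fix c assume c: "c \<in> Cs"
    have 1: "B1 c \<subseteq> carrier V" unfolding B1_def using Rp_carrier sC[OF projn[OF c]] by blast
    have 2: "finite (B1 c)" unfolding B1_def using Rp_finite VX_finite[OF projf[OF c]] by blast
    have 3: "lin_indpt (B1 c)"
    proof (cases c)
      case (Inl T)
      then have "T \<subseteq> {..<n}" "card T + 1 = k" using c On unfolding Cs_def by auto
      then have "lin_indpt (Rp \<union> VX s T)" using inv2r by blast
      then show ?thesis using Inl unfolding B1_def proj_def by simp
    next
      case (Inr U)
      have U: "U \<subseteq> Oth" "card U + 2 = k" using c Inr unfolding Cs_def by auto
      obtain j where j: "j \<in> Oth - U" using exj[OF c] Inr proj_def by auto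
      have fU: "finite U" using U(1) fO finite_subset by blast
      have X: "insert j U \<subseteq> {..<n}" "card (insert j U) + 1 = k" using U j fU On by auto
      then have "lin_indpt (Rp \<union> VX s (insert j U))" using inv2r[OF X] by blast
      moreover have "B1 c \<subseteq> Rp \<union> VX s (insert j U)" unfolding B1_def Inr proj_def VX_insert by auto
      ultimately show ?thesis by (rule subset_li_is_li)
    qed
    show "B1 c \<subseteq> carrier V \<and> finite (B1 c) \<and> lin_indpt (B1 c)" using 1 2 3 by blast
  qed
  have B1le: "card (B1 c) \<le> be + card (proj c) * al" if c: "c \<in> Cs" for c
  proof -
    have "card (B1 c) \<le> card Rp + card (VX s (proj c))" unfolding B1_def by (rule Finite_Set.card_Un_le)
    then show ?thesis using Rp_card sL[OF projn[OF c]] by linarith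
  qed
  have hyp1: "\<forall>c\<in>Cs. \<forall>l\<in>set ls1. rel1 c l \<longrightarrow> (\<exists>G. finite G \<and> G \<subseteq> span (P1 l \<union> B1 c) \<and> lin_indpt G
            \<and> card (B1 c) + card {l'\<in>set ls1. rel1 c l'} \<le> card G)"
  proof (intro ballI impI)
    fix c l assume c: "c \<in> Cs" and l: "l \<in> set ls1" "rel1 c l"
    obtain j t where jt: "l = (j, t)" by force
    have j: "j \<in> Oth - proj c" using l jt s1 unfolding rel1_def by auto
    have jn: "j < n" using j On by auto
    have PB: "P1 l \<union> B1 c \<subseteq> carrier V" using inv0 jn B1c c unfolding P1_def jt by auto
    have spPB: "P1 l \<union> B1 c \<subseteq> span (P1 l \<union> B1 c)" using in_own_span[OF PB] .
    show "\<exists>G. finite G \<and> G \<subseteq> span (P1 l \<union> B1 c) \<and> lin_indpt G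
            \<and> card (B1 c) + card {l'\<in>set ls1. rel1 c l'} \<le> card G"
    proof (cases c)
      case (Inl T)
      have T: "T \<subseteq> Oth" "card T + 1 = k" using c Inl unfolding Cs_def by auto
      have fT: "finite T" using T(1) fO finite_subset by blast
      have jT: "j \<notin> T" using j Inl proj_def by simp
      have X: "insert j T \<subseteq> {..<n}" "card (insert j T) = k" using T jn jT fT On by auto
      have G: "lin_indpt (VX s (insert j T))" "card (VX s (insert j T)) = k * al" using inv1r[OF X] by blast+
      have Gs: "VX s (insert j T) \<subseteq> span (P1 l \<union> B1 c)" using spPB unfolding VX_insert P1_def B1_def jt Inl proj_def by auto
      have "card (B1 c) + card {l'\<in>set ls1. rel1 c l'} \<le> k * al"
      proof -
        have "card (B1 c) \<le> be + card T * al" using B1le[OF c] Inl proj_def by simp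
        moreover have "card {l'\<in>set ls1. rel1 c l'} = m * be" using ccnt1[OF c] Inl proj_def T(2)[symmetric] nm by simp
        moreover have "be + card T * al + m * be = k * al" using alm T(2)[symmetric] by (simp add: algebra_simps)
        ultimately show ?thesis by linarith
      qed
      then show ?thesis using G Gs VX_finite[of "insert j T"] fT by (intro exI[of _ "VX s (insert j T)"]) auto
    next
      case (Inr U)
      have U: "U \<subseteq> Oth" "card U + 2 = k" using c Inr unfolding Cs_def by auto
      have fU: "finite U" using U(1) fO finite_subset by blast
      have jU: "j \<notin> U" using j Inr proj_def by simp
      have X: "insert j U \<subseteq> {..<n}" "card (insert j U) + 1 = k" using U jn jU fU On by auto
      have G: "lin_indpt (Rp \<union> VX s (insert j U))" "card (Rp \<union> VX s (insert j U)) = be + card (insert j U) * al"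
        using inv2r[OF X] by blast+
      have Gs: "Rp \<union> VX s (insert j U) \<subseteq> span (P1 l \<union> B1 c)" using spPB unfolding VX_insert P1_def B1_def jt Inr proj_def by auto
      have "card (B1 c) + card {l'\<in>set ls1. rel1 c l'} \<le> be + card (insert j U) * al"
      proof -
        have "card (B1 c) \<le> be + card U * al" using B1le[OF c] Inr proj_def by simp
        moreover have "card {l'\<in>set ls1. rel1 c l'} = (m + 1) * be" using ccnt1[OF c] Inr proj_def U(2)[symmetric] nm by simp
        moreover have "card (insert j U) = card U + 1" using fU jU by simp
        ultimately show ?thesis using alm by (simp add: algebra_simps)
      qed
      then show ?thesis using G Gs VX_finite[of "insert j U"] fU Rp_finite
        by (intro exI[of _ "Rp \<union> VX s (insert j U)"]) auto
    qed
  qed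
  have P1c: "\<forall>l\<in>set ls1. P1 l \<subseteq> carrier V" using inv0 s1 On unfolding P1_def by auto
  obtain ch1 where ch1: "\<forall>l\<in>set ls1. ch1 l \<in> span (P1 l)"
    "\<forall>c\<in>Cs. lin_indpt (B1 c \<union> ch1 ` {l\<in>set ls1. rel1 c l}) \<and>
       card (B1 c \<union> ch1 ` {l\<in>set ls1. rel1 c l}) = card (B1 c) + card {l\<in>set ls1. rel1 c l}"
    using greedy[OF d1 fCs cCs P1c B1c hyp1] by blast
  have ch1c: "ch1 ` set ls1 \<subseteq> carrier V" using ch1(1) P1c span_sub_carrier by blast
  define W where "W = Rp \<union> ch1 ` set ls1"
  have Wc: "W \<subseteq> carrier V" using Rp_carrier ch1c unfolding W_def by auto
  define ls2 where "ls2 = [0..<al]"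
  have d2: "distinct ls2" by (simp add: ls2_def)
  define B2 where "B2 c = (case c of Inl T \<Rightarrow> VX s T | Inr U \<Rightarrow> Rp \<union> VX s U)" for c :: "nat set + nat set"
  define rel2 where "rel2 c t = True" for c :: "nat set + nat set" and t :: nat
  define P2 where "P2 t = W" for t :: nat
  have s2: "{t\<in>set ls2. rel2 c t} = {..<al}" for c by (auto simp: ls2_def rel2_def)
  have B2c: "\<forall>c\<in>Cs. B2 c \<subseteq> carrier V \<and> finite (B2 c) \<and> lin_indpt (B2 c)"
  proof
    fix c assume c: "c \<in> Cs"
    show "B2 c \<subseteq> carrier V \<and> finite (B2 c) \<and> lin_indpt (B2 c)"
    proof (cases c)
      case (Inl T)
      have "B2 c \<subseteq> B1 c" unfolding B2_def B1_def Inl proj_def by auto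
      moreover have b: "B1 c \<subseteq> carrier V" "finite (B1 c)" "lin_indpt (B1 c)" using B1c c by auto
      ultimately show ?thesis using subset_li_is_li[OF b(3)] finite_subset[OF _ b(2)] by blast
    next
      case (Inr U)
      have "B2 c = B1 c" unfolding B2_def B1_def Inr proj_def by auto
      then show ?thesis using B1c c by simp
    qed
  qed
  have hyp2: "\<forall>c\<in>Cs. \<forall>t\<in>set ls2. rel2 c t \<longrightarrow> (\<exists>G. finite G \<and> G \<subseteq> span (P2 t \<union> B2 c) \<and> lin_indpt G
            \<and> card (B2 c) + card {t'\<in>set ls2. rel2 c t'} \<le> card G)"
  proof (intro ballI impI)
    fix c t assume c: "c \<in> Cs" and t: "t \<in> set ls2" "rel2 c t"
    define G where "G = B1 c \<union> ch1 ` {l\<in>set ls1. rel1 c l}"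
    have Gf: "finite G" unfolding G_def using B1c c by auto
    have Gi: "lin_indpt G" using ch1(2) c unfolding G_def by blast
    have Gcard: "card G = card (B1 c) + (n - 1 - card (proj c)) * be" using ch1(2) c ccnt1[OF c] unfolding G_def by simp
    have Gsub: "G \<subseteq> P2 t \<union> B2 c"
    proof -
      have "ch1 ` {l\<in>set ls1. rel1 c l} \<subseteq> W" unfolding W_def by auto
      moreover have "B1 c \<subseteq> W \<union> B2 c" unfolding B1_def B2_def W_def proj_def by (cases c) auto
      ultimately show ?thesis unfolding G_def P2_def by blast
    qed
    have PB2: "P2 t \<union> B2 c \<subseteq> carrier V" unfolding P2_def using Wc B2c c by blast
    have Gs: "G \<subseteq> span (P2 t \<union> B2 c)" using Gsub in_own_span[OF PB2] by blast
    have "card (B2 c) + al \<le> card G"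
    proof (cases c)
      case (Inl T)
      have T: "T \<subseteq> Oth" "card T + 1 = k" using c Inl unfolding Cs_def by auto
      have "card (B2 c) \<le> card T * al" unfolding B2_def Inl using sL T(1) On by auto
      moreover have "card (B1 c) = be + card T * al" unfolding B1_def Inl proj_def using inv2r[of T] T On by auto
      moreover have "n - 1 - card (proj c) = m" using Inl proj_def T(2)[symmetric] nm by simp
      ultimately show ?thesis using Gcard alm by (simp add: algebra_simps)
    next
      case (Inr U)
      have U: "U \<subseteq> Oth" "card U + 2 = k" using c Inr unfolding Cs_def by auto
      have "B2 c = B1 c" unfolding B2_def B1_def Inr proj_def by auto
      moreover have "n - 1 - card (proj c) = m + 1" using Inr proj_def U(2)[symmetric] nm by simp
      ultimately show ?thesis using Gcard alm by simp
    qed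
    then show "\<exists>G. finite G \<and> G \<subseteq> span (P2 t \<union> B2 c) \<and> lin_indpt G
            \<and> card (B2 c) + card {t'\<in>set ls2. rel2 c t'} \<le> card G"
      using Gf Gi Gs s2[of c] by (intro exI[of _ G]) auto
  qed
  have P2c: "\<forall>t\<in>set ls2. P2 t \<subseteq> carrier V" using Wc unfolding P2_def by blast
  obtain ch2 where ch2: "\<forall>t\<in>set ls2. ch2 t \<in> span (P2 t)"
    "\<forall>c\<in>Cs. lin_indpt (B2 c \<union> ch2 ` {t\<in>set ls2. rel2 c t}) \<and>
       card (B2 c \<union> ch2 ` {t\<in>set ls2. rel2 c t}) = card (B2 c) + card {t\<in>set ls2. rel2 c t}"
    using greedy[OF d2 fCs cCs P2c B2c hyp2] by blast
  have ch2': "lin_indpt (B2 c \<union> ch2 ` {..<al}) \<and> card (B2 c \<union> ch2 ` {..<al}) = card (B2 c) + al" if "c \<in> Cs" for c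
    using ch2(2) that unfolding s2 by simp
  have ch2W: "ch2 ` {..<al} \<subseteq> span W" using ch2(1) unfolding P2_def ls2_def by (auto simp: atLeast0LessThan)
  have ch2c: "ch2 ` {..<al} \<subseteq> carrier V" using ch2W span_sub_carrier[OF Wc] by blast
  define s' where "s' = s(f := map ch2 [0..<al])"
  have sf: "set (s' f) = ch2 ` {..<al}" by (simp add: s'_def atLeast0LessThan)
  define msg where "msg i = map (\<lambda>t. ch1 (i, t)) [0..<be]" for i
  have msgW: "(\<Union>i\<in>{..<n} - {f}. set (msg i)) \<union> set rep = W"
    unfolding W_def s1 Rp_def msg_def Oth_def by (auto simp: atLeast0LessThan)
  have RS: "repair_step R M n al be rep s f s'"
  proof -
    have m1: "\<forall>i<n. i \<noteq> f \<longrightarrow> length (msg i) = be \<and> (\<forall>u\<in>set (msg i). in_span R M (set (s i)) u)"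
    proof (intro allI impI conjI ballI)
      fix i assume i: "i < n" "i \<noteq> f"
      show "length (msg i) = be" by (simp add: msg_def)
      fix u assume "u \<in> set (msg i)"
      then obtain t where t: "t < be" "u = ch1 (i, t)" unfolding msg_def by auto
      have "(i, t) \<in> set ls1" using s1 i t unfolding Oth_def by auto
      then have "u \<in> span (set (s i))" using ch1(1) t unfolding P1_def by auto
      then show "in_span R M (set (s i)) u" using span_in_span inv0 i by blast
    qed
    have m3: "\<forall>u\<in>set rep. in_span R M (set rep) u"
      using in_own_span[OF Rp_carrier] span_in_span[OF Rp_carrier] unfolding Rp_def by blast
    have m5: "\<forall>u\<in>set (s' f). in_span R M ((\<Union>i\<in>{..<n} - {f}. set (msg i)) \<union> set rep) u"
      unfolding msgW sf using ch2W span_in_span[OF Wc] by blast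
    have m4: "length (s' f) = al" by (simp add: s'_def)
    have "\<forall>i. i \<noteq> f \<longrightarrow> s' i = s i" by (simp add: s'_def)
    then show ?thesis unfolding repair_step_def using f m1 length_rep m3 m4 m5 by blast
  qed
  have A: "\<forall>i<n. length (s' i) = al \<and> set (s' i) \<subseteq> carrier V"
    using inv0 sf ch2c by (auto simp: s'_def)
  have B: "\<forall>X. X \<subseteq> {..<n} \<longrightarrow> card X = k \<longrightarrow> lin_indpt (VX s' X) \<and> card (VX s' X) = k * al"
  proof (intro allI impI)
    fix X assume X: "X \<subseteq> {..<n}" "card X = k"
    show "lin_indpt (VX s' X) \<and> card (VX s' X) = k * al"
    proof (cases "f \<in> X")
      case False
      then show ?thesis using inv1r[OF X] VX_upd[OF False] unfolding s'_def by simp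
    next
      case True
      define T where "T = X - {f}"
      have fX: "finite X" using X(1) finite_subset by blast
      have cX: "0 < card X" using fX True card_gt_0_iff by blast
      have T: "T \<subseteq> Oth" "card T + 1 = k" "f \<notin> T" "X = insert f T"
        using X True fX cX unfolding T_def Oth_def by auto
      have c: "Inl T \<in> Cs" using T unfolding Cs_def by auto
      have VXe: "VX s' X = ch2 ` {..<al} \<union> VX s T"
        unfolding T(4) VX_insert sf using VX_upd[OF T(3)] unfolding s'_def by simp
      have TN: "T \<subseteq> {..<n}" using T(1) On by blast
      have c1: "card (VX s T) \<le> card T * al" using sL[OF TN] .
      have c2: "be + card T * al \<le> be + card (VX s T)"
      proof -
        have "be + card T * al = card (Rp \<union> VX s T)" using inv2r[OF TN T(2)] by simp
        also have "\<dots> \<le> card Rp + card (VX s T)" by (rule Finite_Set.card_Un_le)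
        finally show ?thesis using Rp_card by simp
      qed
      have "lin_indpt (VX s T \<union> ch2 ` {..<al}) \<and> card (VX s T \<union> ch2 ` {..<al}) = card (VX s T) + al"
        using ch2'[OF c] unfolding B2_def by simp
      moreover have "card (VX s T) + al = k * al" using c1 c2 T(2)[symmetric] by (simp add: algebra_simps)
      ultimately show ?thesis unfolding VXe by (simp add: Un_commute)
    qed
  qed
  have C: "\<forall>X. X \<subseteq> {..<n} \<longrightarrow> card X + 1 = k \<longrightarrow> lin_indpt (Rp \<union> VX s' X) \<and> card (Rp \<union> VX s' X) = be + card X * al"
  proof (intro allI impI)
    fix X assume X: "X \<subseteq> {..<n}" "card X + 1 = k"
    show "lin_indpt (Rp \<union> VX s' X) \<and> card (Rp \<union> VX s' X) = be + card X * al"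
    proof (cases "f \<in> X")
      case False
      then show ?thesis using inv2r[OF X] VX_upd[OF False] unfolding s'_def by simp
    next
      case True
      define U where "U = X - {f}"
      have fX: "finite X" using X(1) finite_subset by blast
      have cX: "0 < card X" using fX True card_gt_0_iff by blast
      have U: "U \<subseteq> Oth" "card U + 2 = k" "f \<notin> U" "X = insert f U"
        using X True fX cX unfolding U_def Oth_def by auto
      have fU: "finite U" using fX U(4) by auto
      have c: "Inr U \<in> Cs" using U unfolding Cs_def by auto
      have VXe: "Rp \<union> VX s' X = (Rp \<union> VX s U) \<union> ch2 ` {..<al}"
        unfolding U(4) VX_insert sf using VX_upd[OF U(3)] unfolding s'_def by auto
      have UN: "U \<subseteq> {..<n}" using U(1) On by blast
      obtain j where j: "j \<in> Oth - U" using exj[OF c] unfolding proj_def by auto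
      have jn: "j < n" using j On by auto
      have c1: "card (Rp \<union> VX s U) \<le> be + card U * al"
      proof -
        have "card (Rp \<union> VX s U) \<le> card Rp + card (VX s U)" by (rule Finite_Set.card_Un_le)
        then show ?thesis using Rp_card sL[OF UN] by linarith
      qed
      have c2: "be + (card U + 1) * al \<le> card (Rp \<union> VX s U) + al"
      proof -
        have XX: "insert j U \<subseteq> {..<n}" "card (insert j U) + 1 = k" using U j fU On by auto
        have "be + (card U + 1) * al = card (Rp \<union> VX s (insert j U))" using inv2r[OF XX] fU j by simp
        also have "Rp \<union> VX s (insert j U) = (Rp \<union> VX s U) \<union> set (s j)" unfolding VX_insert by auto
        also have "card \<dots> \<le> card (Rp \<union> VX s U) + card (set (s j))" by (rule Finite_Set.card_Un_le)
        also have "card (set (s j)) \<le> al" using inv0 jn card_length[of "s j"] by auto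
        finally show ?thesis by simp
      qed
      have "lin_indpt ((Rp \<union> VX s U) \<union> ch2 ` {..<al}) \<and> card ((Rp \<union> VX s U) \<union> ch2 ` {..<al}) = card (Rp \<union> VX s U) + al"
        using ch2'[OF c] unfolding B2_def by simp
      moreover have "card (Rp \<union> VX s U) + al = be + card X * al" using c1 c2 U(4) U(3) fU
        by (simp add: algebra_simps)
      ultimately show ?thesis unfolding VXe by simp
    qed
  qed
  have "Inv s'" unfolding Inv_def using A B C by blast
  then show ?thesis using RS by blast
qed


lemma Inv_recon:
  assumes "Inv s" shows "reconstructs R M n k s"
  unfolding reconstructs_def
proof (intro allI impI)
  fix S v assume S: "S \<subseteq> {..<n}" "card S = k" and v: "is_vec R M v"
  have inv0: "\<forall>i<n. length (s i) = al \<and> set (s i) \<subseteq> carrier V"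
    using assms unfolding Inv_def by (rule conjunct1)
  have inv1: "\<forall>X. X \<subseteq> {..<n} \<longrightarrow> card X = k \<longrightarrow> lin_indpt (VX s X) \<and> card (VX s X) = k * al"
    using assms unfolding Inv_def by (rule conjunct1[OF conjunct2])
  have li: "lin_indpt (VX s S) \<and> card (VX s S) = k * al" using inv1 S by blast
  have fS: "finite S" using S(1) finite_subset by blast
  have fin: "finite (VX s S)" using VX_finite[OF fS] .
  have C: "VX s S \<subseteq> carrier V" using inv0 S(1) by (intro VX_carrier) auto
  have "span (VX s S) = carrier V" using spans[OF C fin] li M_def by simp
  then have "in_span R M (VX s S) v" using recon[OF _ C v] by simp
  then show "in_span R M (\<Union>i\<in>S. set (s i)) v" unfolding VX_def .
qed

definition strat where
  "strat s f = (if Inv s \<and> f < n then (SOME s'. repair_step R M n al be rep s f s' \<and> Inv s') else s)"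

lemma strat_ok:
  assumes "Inv s" "f < n"
  shows "repair_step R M n al be rep s f (strat s f) \<and> Inv (strat s f)"
  using someI_ex[OF step[OF assms]] assms unfolding strat_def by simp

lemma strat_inv: "Inv s \<Longrightarrow> Inv (strat s f)"
  using strat_ok[of s f] unfolding strat_def by (cases "f < n") auto

lemma run_inv: "Inv s \<Longrightarrow> Inv (run strat s fs)"
  by (induction fs arbitrary: s) (auto intro: strat_inv)

lemma main_dss:
  "\<exists>nodes0 st. storage_ok R M n al nodes0 \<and> length rep = be \<and> (\<forall>v\<in>set rep. is_vec R M v) \<and>
     reconstructs R M n k nodes0 \<and>
     (\<forall>fs. set fs \<subseteq> {..<n} \<longrightarrow>
        (\<forall>f<n. repair_step R M n al be rep (run st nodes0 fs) f (st (run st nodes0 fs) f) \<and>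
               reconstructs R M n k (st (run st nodes0 fs) f)))"
proof -
  obtain s0 where s0: "Inv s0" using init by blast
  have inv0: "\<forall>i<n. length (s0 i) = al \<and> set (s0 i) \<subseteq> carrier V"
    using s0 unfolding Inv_def by (rule conjunct1)
  have so: "storage_ok R M n al s0" unfolding storage_ok_def using inv0 is_vec_carrier by blast
  have rv: "\<forall>v\<in>set rep. is_vec R M v" using Rp_carrier is_vec_carrier unfolding Rp_def by blast
  have rs: "\<forall>fs. set fs \<subseteq> {..<n} \<longrightarrow>
        (\<forall>f<n. repair_step R M n al be rep (run strat s0 fs) f (strat (run strat s0 fs) f) \<and>
               reconstructs R M n k (strat (run strat s0 fs) f))"
  proof (intro allI impI)
    fix fs f assume "set fs \<subseteq> {..<n}" and f: "f < n"
    have "Inv (run strat s0 fs)" using run_inv[OF s0] .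
    then show "repair_step R M n al be rep (run strat s0 fs) f (strat (run strat s0 fs) f) \<and>
               reconstructs R M n k (strat (run strat s0 fs) f)"
      using strat_ok[OF _ f] Inv_recon by blast
  qed
  show ?thesis using so length_rep rv Inv_recon[OF s0] rs by blast
qed

end


theorem proposition3:
  fixes n k d h M alpha alpha' beta :: nat
  assumes "1 \<le> k" and "k \<le> n - 1"
    and "d = n - 1" and "h = 1"
    and "k * alpha = M"
    and "k * (d - k + 2) * beta = M" and "beta > 0"
    and "alpha' = beta"
  shows "\<exists>Q::nat. \<forall>R :: 'a ring.
           field R \<longrightarrow> finite (carrier R) \<longrightarrow> Q \<le> card (carrier R) \<longrightarrow>
           (\<exists>(nodes0 :: nat \<Rightarrow> 'a cvec list) (rep :: 'a cvec list) strat.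
              storage_ok R M n alpha nodes0 \<and>
              length rep = alpha' \<and> (\<forall>v\<in>set rep. is_vec R M v) \<and>
              reconstructs R M n k nodes0 \<and>
              (\<forall>fs. set fs \<subseteq> {..<n} \<longrightarrow>
                 (\<forall>f<n. repair_step R M n alpha beta rep (run strat nodes0 fs) f
                          (strat (run strat nodes0 fs) f) \<and>
                        reconstructs R M n k (strat (run strat nodes0 fs) f))))"
proof -
  have kn: "k + 1 \<le> n" using assms(1,2) by linarith
  have dk: "d - k + 2 = n - k + 1" using assms(2,3) kn by simp
  have e1: "k * ((n - k + 1) * beta) = M" using assms(6) dk by (metis mult.assoc)
  have "k * alpha = k * ((n - k + 1) * beta)" using e1 assms(5) by simp
  then have al: "alpha = (n - k + 1) * beta" using assms(1) by simp
  show ?thesis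
  proof (intro exI[of _ "2 * 2 ^ n + 1"] allI impI)
    fix R :: "'a ring"
    assume R: "field R" "finite (carrier R)" "2 * 2 ^ n + 1 \<le> card (carrier R)"
    interpret F: field R by (rule R(1))
    have vs: "vectorspace R (ring.func_space R {..<M})"
      unfolding vectorspace_def using F.func_space_is_module R(1) by simp
    have ds: "dss R (ring.func_space R {..<M}) M n k alpha beta"
      unfolding dss_def dss_axioms_def fsp_def fsp_axioms_def
      using vs assms(1,5,7) kn al R(3) by auto
    interpret D: dss R "ring.func_space R {..<M}" M n k alpha beta by (rule ds)
    obtain nodes0 st where nst: "storage_ok R M n alpha nodes0" "length D.rep = beta"
      "\<forall>v\<in>set D.rep. is_vec R M v" "reconstructs R M n k nodes0"
      "\<forall>fs. set fs \<subseteq> {..<n} \<longrightarrow>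
        (\<forall>f<n. repair_step R M n alpha beta D.rep (run st nodes0 fs) f (st (run st nodes0 fs) f) \<and>
               reconstructs R M n k (st (run st nodes0 fs) f))"
      using D.main_dss by blast
    show "\<exists>(nodes0 :: nat \<Rightarrow> 'a cvec list) (rep :: 'a cvec list) strat.
              storage_ok R M n alpha nodes0 \<and>
              length rep = alpha' \<and> (\<forall>v\<in>set rep. is_vec R M v) \<and>
              reconstructs R M n k nodes0 \<and>
              (\<forall>fs. set fs \<subseteq> {..<n} \<longrightarrow>
                 (\<forall>f<n. repair_step R M n alpha beta rep (run strat nodes0 fs) f
                          (strat (run strat nodes0 fs) f) \<and>
                        reconstructs R M n k (strat (run strat nodes0 fs) f)))"
      using nst assms(8) by blast
  qed
qed

end
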